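(* Let $\ell$ be a prime, $L$ a finite extension of $\mathbb Q_\ell$, $\tau$ a field automorphism of $L$ of order $2$, $L^\tau$ its fixed field, $\lambda$ a uniformizer of $L^\tau$, and $v_\lambda$ the valuation on $\overline{\mathbb Q_\ell}$ normalized by $v_\lambda(\lambda)=1$. Let $C=\{x\in\mathcal O_L^\times: x\tau(x)=1\}$ and, for $n\ge0$, $C(n)=\{x\in C: v_\lambda(x-1)\ge n\}$. If $\ell\neq2$, then for every $n\ge1$ the quotient $C(n)/C(n+1)$ has order $|\mathcal O_{L^\tau}/\lambda\mathcal O_{L^\tau}|$. If $\ell=2$, the same holds for every $n>v_\lambda(2)$. *)

theory Defs
  imports Complex_Main "HOL-Computational_Algebra.Primes"
begin

definition padic_abs_rat :: "nat \<Rightarrow> rat \<Rightarrow> real" where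
  "padic_abs_rat l r = (if r = 0 then 0 else
     (case quotient_of r of (a, b) \<Rightarrow>
        real l powi (int (multiplicity (int l) b) - int (multiplicity (int l) a))))"

definition is_absval :: "('a::field \<Rightarrow> real) \<Rightarrow> bool" where
  "is_absval f \<longleftrightarrow> (\<forall>x. 0 \<le> f x) \<and> (\<forall>x. f x = 0 \<longleftrightarrow> x = 0) \<and>
     (\<forall>x y. f (x * y) = f x * f y) \<and> (\<forall>x y. f (x + y) \<le> f x + f y)"

definition absval_complete :: "('a::field \<Rightarrow> real) \<Rightarrow> bool" where
  "absval_complete f \<longleftrightarrow> (\<forall>X :: nat \<Rightarrow> 'a.
     (\<forall>e>0. \<exists>N. \<forall>m\<ge>N. \<forall>n\<ge>N. f (X m - X n) < e) \<longrightarrow>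
     (\<exists>y. (\<lambda>n. f (X n - y)) \<longlonglongrightarrow> 0))"

text \<open>The closure of the prime field Q inside L; when L is complete and the absolute value
  extends the l-adic one, this is (a copy of) Q_l.\<close>
definition closure_of_rat :: "('a::field_char_0 \<Rightarrow> real) \<Rightarrow> 'a set" where
  "closure_of_rat f = {x. \<forall>e>0. \<exists>q. f (x - of_rat q) < e}"

definition finite_dim_over :: "'a::field set \<Rightarrow> bool" where
  "finite_dim_over K \<longleftrightarrow> (\<exists>B. finite B \<and>
     (\<forall>x. \<exists>c. (\<forall>b\<in>B. c b \<in> K) \<and> x = (\<Sum>b\<in>B. c b * b)))"

text \<open>L with absolute value f is a finite extension of Q_l (with its unique extended absolute value).\<close>
definition finite_ext_Ql :: "nat \<Rightarrow> ('a::field_char_0 \<Rightarrow> real) \<Rightarrow> bool" where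
  "finite_ext_Ql l f \<longleftrightarrow> is_absval f \<and> (\<forall>q. f (of_rat q) = padic_abs_rat l q) \<and>
     absval_complete f \<and> finite_dim_over (closure_of_rat f)"

definition field_aut_order2 :: "('a::field \<Rightarrow> 'a) \<Rightarrow> bool" where
  "field_aut_order2 t \<longleftrightarrow> bij t \<and> (\<forall>x y. t (x + y) = t x + t y) \<and>
     (\<forall>x y. t (x * y) = t x * t y) \<and> t 1 = 1 \<and> t \<noteq> id \<and> t \<circ> t = id"

definition fixed_field :: "('a \<Rightarrow> 'a) \<Rightarrow> 'a set" where
  "fixed_field t = {x. t x = x}"

definition int_ring_fixed :: "('a::field \<Rightarrow> real) \<Rightarrow> ('a \<Rightarrow> 'a) \<Rightarrow> 'a set" where
  "int_ring_fixed f t = {x \<in> fixed_field t. f x \<le> 1}"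

definition is_uniformizer :: "('a::field \<Rightarrow> real) \<Rightarrow> ('a \<Rightarrow> 'a) \<Rightarrow> 'a \<Rightarrow> bool" where
  "is_uniformizer f t lam \<longleftrightarrow> lam \<in> int_ring_fixed f t \<and>
     {y \<in> int_ring_fixed f t. f y < 1} = {lam * z | z. z \<in> int_ring_fixed f t}"

definition residue_classes :: "('a::field \<Rightarrow> real) \<Rightarrow> ('a \<Rightarrow> 'a) \<Rightarrow> 'a \<Rightarrow> 'a set set" where
  "residue_classes f t lam = (\<lambda>x. {y \<in> int_ring_fixed f t. \<exists>z \<in> int_ring_fixed f t. y - x = lam * z})
       ` int_ring_fixed f t"

definition Cgrp :: "('a::field \<Rightarrow> real) \<Rightarrow> ('a \<Rightarrow> 'a) \<Rightarrow> 'a set" where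
  "Cgrp f t = {x. f x = 1 \<and> x * t x = 1}"

text \<open>C(n) = {x in C : v_lam(x - 1) \<ge> n}, i.e. |x - 1| \<le> |lam|^n.\<close>
definition Cfilt :: "('a::field \<Rightarrow> real) \<Rightarrow> ('a \<Rightarrow> 'a) \<Rightarrow> 'a \<Rightarrow> nat \<Rightarrow> 'a set" where
  "Cfilt f t lam n = {x \<in> Cgrp f t. f (x - 1) \<le> f lam ^ n}"

definition Cquot :: "('a::field \<Rightarrow> real) \<Rightarrow> ('a \<Rightarrow> 'a) \<Rightarrow> 'a \<Rightarrow> nat \<Rightarrow> 'a set set" where
  "Cquot f t lam n = (\<lambda>x. (\<lambda>c. x * c) ` Cfilt f t lam (Suc n)) ` Cfilt f t lam n"

end

theory Submission
  imports Defs
begin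



locale AV =
  fixes f :: "'a::field_char_0 \<Rightarrow> real" and l :: nat
  assumes av: "is_absval f" and pl: "prime l"
    and ratv: "\<And>q. f (of_rat q) = padic_abs_rat l q"
begin

lemma nonneg[simp]: "0 \<le> f x" using av unfolding is_absval_def by auto
lemma zero_iff[simp]: "f x = 0 \<longleftrightarrow> x = 0" using av unfolding is_absval_def by auto
lemma f0[simp]: "f 0 = 0" using zero_iff by blast
lemma mult[simp]: "f (x * y) = f x * f y" using av unfolding is_absval_def by auto
lemma tri: "f (x + y) \<le> f x + f y" using av unfolding is_absval_def by auto
lemma one[simp]: "f 1 = 1"
proof -
  have "f 1 = f 1 * f 1" using mult[of 1 1] by simp
  moreover have "f 1 \<noteq> 0" by simp
  ultimately show ?thesis by (metis mult_cancel_left1)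
qed
lemma pow[simp]: "f (x ^ n) = f x ^ n" by (induction n) auto
lemma inv[simp]: "f (inverse x) = inverse (f x)"
proof (cases "x = 0")
  case False
  have h: "f x * f (inverse x) = 1" using mult[of x "inverse x"] False by (simp del: mult)
  show ?thesis using inverse_unique[OF h] by simp
qed simp
lemma divide[simp]: "f (x / y) = f x / f y"
  by (simp add: divide_inverse)
lemma minus_one: "f (- 1) = 1"
proof -
  have "f (-1) * f (-1) = 1" using mult[of "-1" "-1"] by simp
  thus ?thesis using nonneg[of "-1"]
    by (metis (no_types, lifting) less_le mult_le_cancel_right1 mult_less_cancel_left1 not_le)
qed
lemma uminus[simp]: "f (- x) = f x"
  using mult[of "-1" x] minus_one by simp
lemma commute: "f (x - y) = f (y - x)"
  by (metis minus_diff_eq uminus)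

lemma f_int_le1: "f (of_int z) \<le> 1"
proof -
  have "f (of_int z) = f (of_rat (of_int z))" by simp
  also have "\<dots> = padic_abs_rat l (of_int z)" by (rule ratv)
  also have "\<dots> \<le> 1"
  proof (cases "z = 0")
    case False
    have "l \<ge> 2" using pl prime_ge_2_nat by blast
    hence "inverse (real l) \<le> 1" by (simp add: inverse_le_1_iff)
    then show ?thesis using False
      by (auto simp: padic_abs_rat_def power_int_def intro!: power_le_one)
  qed (simp add: padic_abs_rat_def)
  finally show ?thesis .
qed

lemma f_nat_le1: "f (of_nat m) \<le> 1"
  using f_int_le1[of "int m"] by simp

lemma f_int_ndvd: "\<not> int l dvd z \<Longrightarrow> f (of_int z) = 1"
proof -
  assume a: "\<not> int l dvd z"
  hence z: "z \<noteq> 0" by auto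
  have "f (of_int z) = f (of_rat (of_int z))" by simp
  also have "\<dots> = padic_abs_rat l (of_int z)" by (rule ratv)
  also have "\<dots> = 1" using z a by (simp add: padic_abs_rat_def not_dvd_imp_multiplicity_0)
  finally show ?thesis .
qed

lemma f_l: "f (of_nat l) = 1 / real l"
proof -
  have l2: "l \<ge> 2" using pl prime_ge_2_nat by blast
  have "f (of_nat l) = f (of_rat (of_int (int l)))" by simp
  also have "\<dots> = padic_abs_rat l (of_int (int l))" by (rule ratv)
  also have "\<dots> = 1 / real l" using l2 pl
    by (simp add: padic_abs_rat_def multiplicity_self prime_gt_1_int power_int_minus divide_inverse)
  finally show ?thesis .
qed

lemma f_l_lt1: "f (of_nat l) < 1"
  using f_l pl prime_gt_1_nat by (simp add: divide_less_eq)

end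



lemma exp_beats_lin:
  fixes r :: real assumes "r > 1" shows "\<exists>N. real N + 1 < r ^ N"
proof -
  define h where "h = r - 1"
  have h: "h > 0" using assms h_def by simp
  obtain m :: nat where m: "real m > 2 / h^2" using reals_Archimedean2 by blast
  have mh: "real m * h^2 > 2" using m h by (simp add: field_simps)
  have b: "1 + real m * h \<le> r ^ m" using Bernoulli_inequality[of h m] h h_def by simp
  have "(1 + real m * h)^2 \<le> (r^m)^2"
    using b h by (intro power_mono) (auto)
  moreover have "(1 + real m * h)^2 = 1 + 2 * real m * h + real m * (real m * h^2)"
    by (simp add: power2_eq_square algebra_simps)
  moreover have "real m * (real m * h^2) > 2 * real m" using mh m h
  proof -
    have "real m > 0" using m h by (smt (verit) divide_pos_pos zero_less_power)
    thus ?thesis using mh by simp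
  qed
  moreover have "2 * real m * h \<ge> 0" using h by simp
  moreover have "r^(2*m) = (r^m)^2" by (metis mult.commute power_mult)
  ultimately have "2 * real m + 1 < r ^ (2*m)"
    by linarith
  hence "real (2*m) + 1 < r ^ (2*m)" by simp
  thus ?thesis by blast
qed

context AV begin

lemma sum_tri: "f (sum g A) \<le> sum (\<lambda>i. f (g i)) A"
proof (induction A rule: infinite_finite_induct)
  case (insert x F)
  then show ?case using tri[of "g x" "sum g F"] by simp
qed auto

lemma ultra: "f (x + y) \<le> max (f x) (f y)"
proof (rule ccontr)
  assume "\<not> ?thesis"
  hence c: "f (x + y) > max (f x) (f y)" by (simp add: not_le)
  define M where "M = max (f x) (f y)"
  have M0: "M \<ge> 0" unfolding M_def by (simp add: le_max_iff_disj)
  have Mp: "M > 0"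
  proof (rule ccontr)
    assume "\<not> M > 0"
    hence "M = 0" using M0 by simp
    hence "x = 0" "y = 0" unfolding M_def by (metis max.cobounded1 max.cobounded2 nonneg order_antisym zero_iff)+
    thus False using c by simp
  qed
  have bound: "f (x + y) ^ N \<le> (real N + 1) * M ^ N" for N
  proof -
    have "f (x + y) ^ N = f ((x+y)^N)" by simp
    also have "(x+y)^N = (\<Sum>k\<le>N. of_nat (N choose k) * x^k * y^(N-k))"
      by (rule binomial_ring)
    also have "f \<dots> \<le> (\<Sum>k\<le>N. f (of_nat (N choose k) * x^k * y^(N-k)))" by (rule sum_tri)
    also have "\<dots> \<le> (\<Sum>k\<le>N. M ^ N)"
    proof (rule sum_mono)
      fix k assume k: "k \<in> {..N}"
      have "f (of_nat (N choose k) * x^k * y^(N-k)) = f (of_nat (N choose k)) * f x ^ k * f y ^ (N-k)"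
        by simp
      also have "\<dots> \<le> 1 * M ^ k * M ^ (N - k)"
        using f_nat_le1 M_def M0 by (intro mult_mono power_mono) auto
      also have "\<dots> = M ^ N" using k by (simp add: power_add[symmetric])
      finally show "f (of_nat (N choose k) * x^k * y^(N-k)) \<le> M ^ N" .
    qed
    also have "\<dots> = (real N + 1) * M ^ N" by simp
    finally show ?thesis .
  qed
  define r where "r = f (x+y) / M"
  have r1: "r > 1" using c Mp unfolding r_def M_def by simp
  obtain N where N: "real N + 1 < r ^ N" using exp_beats_lin[OF r1] by blast
  have "r ^ N = f (x+y) ^ N / M ^ N" unfolding r_def by (simp add: power_divide)
  also have "\<dots> \<le> real N + 1" using bound[of N] Mp by (simp add: divide_le_eq)
  finally show False using N by simp
qed

lemma ultra_diff: "f (x - y) \<le> max (f x) (f y)"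
  using ultra[of x "-y"] by simp

lemma ultra_strict: "f y < f x \<Longrightarrow> f (x + y) = f x"
proof -
  assume a: "f y < f x"
  have "f (x + y) \<le> f x" using ultra[of x y] a by simp
  moreover have "f x \<le> max (f (x+y)) (f y)" using ultra[of "x+y" "-y"] by simp
  ultimately show ?thesis using a by auto
qed

lemma sum_lt: "(\<And>i. i \<in> A \<Longrightarrow> f (g i) < c) \<Longrightarrow> c > 0 \<Longrightarrow> f (sum g A) < c"
proof (induction A rule: infinite_finite_induct)
  case (insert x F)
  have "f (g x) < c" "f (sum g F) < c" using insert by auto
  then show ?case using ultra[of "g x" "sum g F"] insert(1,2) by simp
qed auto

lemma sum_le: "(\<And>i. i \<in> A \<Longrightarrow> f (g i) \<le> c) \<Longrightarrow> c \<ge> 0 \<Longrightarrow> f (sum g A) \<le> c"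
proof (induction A rule: infinite_finite_induct)
  case (insert x F)
  have "f (g x) \<le> c" "f (sum g F) \<le> c" using insert by auto
  then show ?case using ultra[of "g x" "sum g F"] insert(1,2) by simp
qed auto

lemma f_ldvd: "int l dvd z \<Longrightarrow> f (of_int z) < 1"
proof -
  assume "int l dvd z"
  then obtain w where "z = int l * w" by blast
  hence "f (of_int z) = f (of_nat l) * f (of_int w)" by simp
  also have "\<dots> \<le> f (of_nat l)" using f_int_le1[of w]
    by (simp add: mult_left_le)
  finally show ?thesis using f_l_lt1 by simp
qed

end



lemma sum_closed:
  assumes "0 \<in> K" "\<And>a b. a\<in>K \<Longrightarrow> b\<in>K \<Longrightarrow> a+b \<in> K" "\<And>i. i \<in> A \<Longrightarrow> g i \<in> K"
  shows "sum g A \<in> K"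
  using assms(3)
proof (induction A rule: infinite_finite_induct)
  case (insert x F) thus ?case using assms(2) by simp
qed (use assms(1) in auto)

lemma lin_dep:
  fixes K :: "'a::field set"
  assumes K0: "0 \<in> K" and K1: "1 \<in> K" and Kadd: "\<And>a b. a\<in>K \<Longrightarrow> b\<in>K \<Longrightarrow> a+b \<in> K"
    and Kmul: "\<And>a b. a\<in>K \<Longrightarrow> b\<in>K \<Longrightarrow> a*b \<in> K" and Kneg: "\<And>a. a\<in>K \<Longrightarrow> -a \<in> K"
    and fB: "finite B"
  shows "finite I \<Longrightarrow> card B < card I \<Longrightarrow>
     (\<forall>i\<in>I. \<exists>c. (\<forall>b\<in>B. c b \<in> K) \<and> v i = (\<Sum>b\<in>B. c b * b)) \<Longrightarrow>
     \<exists>c. (\<forall>i\<in>I. c i \<in> K) \<and> (\<exists>i\<in>I. c i \<noteq> 0) \<and> (\<Sum>i\<in>I. c i * v i) = 0"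
  using fB
proof (induction B arbitrary: I v rule: finite_induct)
  case empty
  then obtain i where i: "i \<in> I" by fastforce
  have v0: "\<forall>j\<in>I. v j = 0" using empty by auto
  show ?case
    by (rule exI[of _ "\<lambda>j. if j = i then 1 else 0"]) (use i v0 K0 K1 in auto)
next
  case (insert b B I v)
  from insert.prems(3) obtain cf where cf:
    "\<forall>i\<in>I. (\<forall>b'\<in>insert b B. cf i b' \<in> K) \<and> v i = (\<Sum>b'\<in>insert b B. cf i b' * b')"
    using bchoice[OF insert.prems(3)] by blast
  define S where "S i = (\<Sum>b'\<in>B. cf i b' * b')" for i
  have vdec: "v i = cf i b * b + S i" if "i \<in> I" for i
    using cf that insert.hyps unfolding S_def by simp
  have cfK: "cf i b' \<in> K" if "i \<in> I" "b' \<in> insert b B" for i b' using cf that by blast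
  show ?case
  proof (cases "\<forall>i\<in>I. cf i b = 0")
    case True
    have cB: "card B < card I" using insert by simp
    have "\<forall>i\<in>I. \<exists>c. (\<forall>b\<in>B. c b \<in> K) \<and> v i = (\<Sum>b\<in>B. c b * b)"
    proof
      fix i assume i: "i \<in> I"
      show "\<exists>c. (\<forall>b\<in>B. c b \<in> K) \<and> v i = (\<Sum>b\<in>B. c b * b)"
        by (rule exI[of _ "cf i"]) (use i True vdec cfK in \<open>auto simp: S_def\<close>)
    qed
    from insert.IH[OF insert.prems(1) cB this] show ?thesis .
  next
    case False
    then obtain i0 where i0: "i0 \<in> I" "cf i0 b \<noteq> 0" by blast
    define a0 where "a0 = cf i0 b"
    define I' where "I' = I - {i0}"
    define v' where "v' i = a0 * v i - cf i b * v i0" for i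
    have fI': "finite I'" using insert.prems(1) I'_def by simp
    have cI': "card B < card I'" using insert.prems(1,2) insert.hyps i0 I'_def by simp
    have "\<forall>i\<in>I'. \<exists>c. (\<forall>b\<in>B. c b \<in> K) \<and> v' i = (\<Sum>b\<in>B. c b * b)"
    proof
      fix i assume i: "i \<in> I'"
      hence iI: "i \<in> I" unfolding I'_def by simp
      define c where "c b' = a0 * cf i b' + - (cf i b * cf i0 b')" for b'
      have "v' i = a0 * S i - cf i b * S i0"
        unfolding v'_def using vdec[OF iI] vdec[OF i0(1)] a0_def by (simp add: algebra_simps)
      also have "\<dots> = (\<Sum>b'\<in>B. a0 * (cf i b' * b') - cf i b * (cf i0 b' * b'))"
        unfolding S_def by (simp add: sum_distrib_left sum_subtractf)
      also have "\<dots> = (\<Sum>b'\<in>B. c b' * b')"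
        unfolding c_def by (intro sum.cong refl) (simp add: algebra_simps)
      finally have "v' i = (\<Sum>b'\<in>B. c b' * b')" .
      moreover have "\<forall>b'\<in>B. c b' \<in> K"
      proof
        fix b' assume b': "b' \<in> B"
        have "cf i0 b \<in> K" "cf i b' \<in> K" "cf i b \<in> K" "cf i0 b' \<in> K" using cfK iI i0(1) b' by auto
        thus "c b' \<in> K" unfolding c_def a0_def by (intro Kadd Kmul Kneg) auto
      qed
      ultimately show "\<exists>c. (\<forall>b\<in>B. c b \<in> K) \<and> v' i = (\<Sum>b\<in>B. c b * b)" by blast
    qed
    from insert.IH[OF fI' cI' this] obtain c' where c':
      "\<forall>i\<in>I'. c' i \<in> K" "\<exists>i\<in>I'. c' i \<noteq> 0" "(\<Sum>i\<in>I'. c' i * v' i) = 0" by blast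
    define c where "c i = (if i = i0 then - (\<Sum>j\<in>I'. c' j * cf j b) else c' i * a0)" for i
    have cK: "\<forall>i\<in>I. c i \<in> K"
    proof
      fix i assume i: "i \<in> I"
      show "c i \<in> K"
      proof (cases "i = i0")
        case True
        have "(\<Sum>j\<in>I'. c' j * cf j b) \<in> K"
          by (rule sum_closed[OF K0 Kadd]) (use c'(1) cfK I'_def Kmul in auto)
        thus ?thesis using True c_def Kneg by simp
      next
        case False
        thus ?thesis using c'(1) i I'_def c_def Kmul cfK i0(1) a0_def by auto
      qed
    qed
    have cnz: "\<exists>i\<in>I. c i \<noteq> 0"
    proof -
      obtain j where j: "j \<in> I'" "c' j \<noteq> 0" using c'(2) by blast
      hence "c j = c' j * a0" "j \<in> I" "j \<noteq> i0" using c_def I'_def by auto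
      moreover have "c' j * a0 \<noteq> 0" using j i0(2) a0_def by simp
      ultimately show ?thesis by metis
    qed
    have "(\<Sum>i\<in>I. c i * v i) = c i0 * v i0 + (\<Sum>i\<in>I'. c i * v i)"
      using insert.prems(1) i0(1) I'_def by (simp add: sum.remove)
    also have "(\<Sum>i\<in>I'. c i * v i) = (\<Sum>i\<in>I'. c' i * a0 * v i)"
      by (rule sum.cong) (auto simp: c_def I'_def)
    also have "c i0 * v i0 = - (\<Sum>j\<in>I'. c' j * cf j b * v i0)"
      by (simp add: c_def sum_distrib_right)
    also have "- (\<Sum>j\<in>I'. c' j * cf j b * v i0) + (\<Sum>i\<in>I'. c' i * a0 * v i)
        = (\<Sum>i\<in>I'. c' i * a0 * v i - c' i * cf i b * v i0)"
      by (simp add: sum_subtractf)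
    also have "\<dots> = (\<Sum>i\<in>I'. c' i * v' i)"
      unfolding v'_def by (intro sum.cong refl) (simp add: algebra_simps)
    also have "\<dots> = 0" by (rule c'(3))
    finally show ?thesis using cK cnz by blast
  qed
qed




context AV begin

abbreviation "K0 \<equiv> closure_of_rat f"

lemma K0_rat: "of_rat q \<in> K0"
  unfolding closure_of_rat_def by (auto intro!: exI[of _ q])

lemma K0_0: "0 \<in> K0" using K0_rat[of 0] by simp
lemma K0_1: "1 \<in> K0" using K0_rat[of 1] by simp

lemma K0_add: "x \<in> K0 \<Longrightarrow> y \<in> K0 \<Longrightarrow> x + y \<in> K0"
  unfolding closure_of_rat_def
proof (safe)
  fix e :: real assume x: "\<forall>e>0. \<exists>q. f (x - of_rat q) < e" and y: "\<forall>e>0. \<exists>q. f (y - of_rat q) < e"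
    and e: "e > 0"
  obtain q where q: "f (x - of_rat q) < e" using x e by blast
  obtain q' where q': "f (y - of_rat q') < e" using y e by blast
  have "x + y - of_rat (q + q') = (x - of_rat q) + (y - of_rat q')" by (simp add: of_rat_add)
  moreover have "f ((x - of_rat q) + (y - of_rat q')) < e" using ultra[of "x - of_rat q" "y - of_rat q'"] q q' by simp
  ultimately have "f (x + y - of_rat (q + q')) < e" by metis
  thus "\<exists>q. f (x + y - of_rat q) < e" by blast
qed

lemma K0_neg: "x \<in> K0 \<Longrightarrow> - x \<in> K0"
  unfolding closure_of_rat_def
proof (safe)
  fix e :: real assume x: "\<forall>e>0. \<exists>q. f (x - of_rat q) < e" and e: "e > 0"
  obtain q where q: "f (x - of_rat q) < e" using x e by blast
  have "- x - of_rat (- q) = - (x - of_rat q)" by (simp add: of_rat_minus)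
  hence "f (- x - of_rat (- q)) < e" using q by (metis uminus)
  thus "\<exists>q. f (- x - of_rat q) < e" by blast
qed

lemma K0_mult: "x \<in> K0 \<Longrightarrow> y \<in> K0 \<Longrightarrow> x * y \<in> K0"
  unfolding closure_of_rat_def
proof (safe)
  fix e :: real assume x: "\<forall>e>0. \<exists>q. f (x - of_rat q) < e" and y: "\<forall>e>0. \<exists>q. f (y - of_rat q) < e"
    and e: "e > 0"
  define B where "B = max (f y) 1"
  have B: "B \<ge> 1" unfolding B_def by simp
  obtain q where q: "f (x - of_rat q) < e / B" using x e B by (metis divide_pos_pos less_le_trans zero_less_one)
  obtain q' where q': "f (y - of_rat q') < min 1 (e / (f x + 1))"
    using y e by (metis divide_pos_pos less_numeral_extra(1) min_less_iff_conj nonneg add_nonneg_pos zero_less_one)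
  have fq': "f (of_rat q') \<le> B"
  proof -
    have "of_rat q' = y - (y - of_rat q')" by simp
    hence "f (of_rat q') \<le> max (f y) (f (y - of_rat q'))" using ultra_diff by metis
    thus ?thesis using q' unfolding B_def by auto
  qed
  have t1: "f x * f (y - of_rat q') < e"
  proof -
    have "f x * f (y - of_rat q') \<le> f x * (e / (f x + 1))" using q' by (intro mult_left_mono) auto
    also have "\<dots> = e * (f x / (f x + 1))" by simp
    also have "\<dots> < e * 1"
    proof -
      have p: "f x + 1 > 0" using nonneg[of x] by linarith
      show ?thesis using e p by (intro mult_strict_left_mono) (auto simp: divide_less_eq)
    qed
    finally show ?thesis by simp
  qed
  have t2: "f (of_rat q') * f (x - of_rat q) < e"
  proof (cases "f (x - of_rat q) = 0")
    case True thus ?thesis using e by simp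
  next
    case False
    have "f (of_rat q') * f (x - of_rat q) \<le> B * f (x - of_rat q)" using fq' by (intro mult_right_mono) auto
    also have "\<dots> < B * (e / B)" using q B by (intro mult_strict_left_mono) auto
    also have "\<dots> = e" using B by simp
    finally show ?thesis .
  qed
  have "x * y - of_rat (q * q') = x * (y - of_rat q') + of_rat q' * (x - of_rat q)"
    by (simp add: of_rat_mult right_diff_distrib left_diff_distrib mult.commute)
  hence "f (x * y - of_rat (q * q')) < e" using ultra[of "x * (y - of_rat q')" "of_rat q' * (x - of_rat q)"] t1 t2
    by simp
  thus "\<exists>q. f (x * y - of_rat q) < e" by blast
qed

lemma K0_div_rat: "x \<in> K0 \<Longrightarrow> q \<noteq> 0 \<Longrightarrow> x / of_rat q \<in> K0"
  unfolding closure_of_rat_def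
proof (safe)
  fix e :: real assume x: "\<forall>e>0. \<exists>q. f (x - of_rat q) < e" and e: "e > 0" and q: "q \<noteq> 0"
  have fq: "f (of_rat q) > 0" using q by (simp add: less_le)
  obtain q' where q': "f (x - of_rat q') < e * f (of_rat q)" using x e fq by (metis mult_pos_pos)
  have "x / of_rat q - of_rat (q' / q) = (x - of_rat q') / of_rat q" using q
    by (simp add: of_rat_divide diff_divide_distrib)
  hence "f (x / of_rat q - of_rat (q' / q)) < e" using q' fq by (simp add: divide_less_eq)
  thus "\<exists>q'. f (x / of_rat q - of_rat q') < e" by blast
qed

lemma int_approx:
  assumes x: "x \<in> K0" and fx: "f x \<le> 1"
  shows "\<exists>n::int. f (x - of_int n) < 1"
proof -
  have "\<forall>e>0. \<exists>q. f (x - of_rat q) < e" using x unfolding closure_of_rat_def by simp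
  then obtain q where q: "f (x - of_rat q) < 1" by (meson zero_less_one)
  have fq: "f (of_rat q) \<le> 1"
  proof -
    have "of_rat q = x - (x - of_rat q)" by simp
    hence "f (of_rat q) \<le> max (f x) (f (x - of_rat q))" using ultra_diff by metis
    thus ?thesis using q fx by auto
  qed
  obtain a b where ab: "quotient_of q = (a, b)" by (cases "quotient_of q")
  have b0: "b > 0" using quotient_of_denom_pos[OF ab] .
  have cop: "coprime a b" using quotient_of_coprime[OF ab] .
  have qab: "of_rat q = (of_int a / of_int b :: 'a)"
    using quotient_of_div[OF ab] by (simp add: of_rat_divide)
  have pli: "prime (int l)" using pl by simp
  have nb: "\<not> int l dvd b"
  proof
    assume lb: "int l dvd b"
    have "\<not> int l dvd a"
    proof
      assume "int l dvd a"
      hence "is_unit (int l)" using lb cop coprime_common_divisor by blast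
      thus False using pli by auto
    qed
    hence fa: "f (of_int a) = 1" by (rule f_int_ndvd)
    have fb: "f (of_int b) < 1" using f_ldvd[OF lb] .
    have "f (of_int b) > 0" using b0 by (simp add: less_le)
    hence "f (of_rat q) > 1" using qab fa fb by simp
    thus False using fq by simp
  qed
  have fb1: "f (of_int b) = 1" using f_int_ndvd[OF nb] .
  have "coprime (int l) b" using prime_imp_coprime[OF pli nb] .
  then obtain u v where uv: "u * b + v * int l = 1" using bezout_int[of b "int l"]
    by (metis coprime_iff_gcd_eq_1 gcd.commute)
  have "of_rat q - of_int (a * u) = (of_int a * of_int v * of_nat l / of_int b :: 'a)"
  proof -
    have bnz: "(of_int b :: 'a) \<noteq> 0" using b0 by simp
    have "(of_int u :: 'a) * of_int b + of_int v * of_nat l = 1"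
      using arg_cong[OF uv, of "of_int :: int \<Rightarrow> 'a"] by simp
    hence e1: "1 - (of_int u :: 'a) * of_int b = of_int v * of_nat l" by (simp add: algebra_simps)
    have "(of_int a / of_int b :: 'a) - of_int (a * u) = of_int a * (1 - of_int u * of_int b) / of_int b"
      using bnz by (simp add: field_simps)
    also have "\<dots> = of_int a * of_int v * of_nat l / of_int b" unfolding e1 by (simp add: mult.assoc)
    finally show ?thesis unfolding qab .
  qed
  hence "f (of_rat q - of_int (a * u)) = f (of_int a) * f (of_int v) * f (of_nat l)"
    using fb1 by simp
  also have "\<dots> \<le> f (of_nat l)"
    using f_int_le1[of a] f_int_le1[of v]
  proof -
    have "f (of_int a) * f (of_int v) \<le> 1" using f_int_le1[of a] f_int_le1[of v] by (intro mult_le_one) auto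
    thus ?thesis by (intro mult_left_le_one_le) auto
  qed
  finally have "f (of_rat q - of_int (a * u)) < 1" using f_l_lt1 by simp
  moreover have "x - of_int (a * u) = (x - of_rat q) + (of_rat q - of_int (a*u))" by simp
  ultimately have "f (x - of_int (a * u)) < 1" using ultra[of "x - of_rat q" "of_rat q - of_int (a*u)"] q
    by simp
  thus ?thesis by blast
qed

end



definition NL :: "nat \<Rightarrow> nat \<Rightarrow> nat list set" where
  "NL l k = {ns. length ns = k \<and> (\<forall>a\<in>set ns. a < l)}"

definition comb :: "(nat \<Rightarrow> 'a::field) \<Rightarrow> nat list \<Rightarrow> 'a" where
  "comb Y ns = (\<Sum>j<length ns. of_nat (ns!j) * Y j)"

lemma finite_NL: "finite (NL l k)"
proof -
  have "NL l k = {xs. set xs \<subseteq> {..<l} \<and> length xs = k}" unfolding NL_def by auto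
  thus ?thesis using finite_lists_length_eq[of "{..<l}" k] by simp
qed

lemma comb_snoc: "length xs = k \<Longrightarrow> comb (Y(k:=z)) (xs@[a]) = comb Y xs + of_nat a * z"
  unfolding comb_def by (simp add: nth_append)

lemma comb_cong: "(\<And>j. j < length ns \<Longrightarrow> Y j = Y' j) \<Longrightarrow> comb Y ns = comb Y' ns"
  unfolding comb_def by (intro sum.cong) auto

lemma comb_zero: "comb Y (replicate k 0) = 0"
  unfolding comb_def by simp

context AV begin

lemma small_term: "int l dvd w \<Longrightarrow> f y \<le> 1 \<Longrightarrow> f (of_int w * y) < 1"
proof -
  assume "int l dvd w" "f y \<le> 1"
  hence "f (of_int w) < 1" using f_ldvd by blast
  moreover have "f (of_int w * y) \<le> f (of_int w)" using \<open>f y \<le> 1\<close>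
    by (simp add: mult_left_le)
  ultimately show ?thesis by simp
qed

definition distinctY :: "(nat \<Rightarrow> 'a) \<Rightarrow> nat \<Rightarrow> bool" where
  "distinctY Y k \<longleftrightarrow> (\<forall>j<k. f (Y j) \<le> 1) \<and>
     (\<forall>ns\<in>NL l k. \<forall>ns'\<in>NL l k. f (comb Y ns - comb Y ns') < 1 \<longrightarrow> ns = ns')"

lemma reduce_mod:
  assumes "\<And>j. j < k \<Longrightarrow> f (Y j) \<le> 1"
  shows "f ((\<Sum>j<k. of_int (w j) * Y j) - comb Y (map (\<lambda>j. nat (w j mod int l)) [0..<k])) < 1"
proof -
  have "(\<Sum>j<k. of_int (w j) * Y j) - comb Y (map (\<lambda>j. nat (w j mod int l)) [0..<k])
      = (\<Sum>j<k. of_int (w j - w j mod int l) * Y j)"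
    unfolding comb_def using pl
    by (simp add: sum_subtractf[symmetric] algebra_simps prime_gt_0_nat)
  also have "f \<dots> < 1"
  proof (rule sum_lt)
    fix j assume "j \<in> {..<k}"
    hence "f (Y j) \<le> 1" using assms by simp
    moreover have "int l dvd (w j - w j mod int l)" by (simp add: mod_eq_0_iff_dvd minus_mod_eq_mult_div[symmetric])
    ultimately show "f (of_int (w j - w j mod int l) * Y j) < 1" using small_term by blast
  qed simp
  finally show ?thesis .
qed

lemma map_in_NL: "map (\<lambda>j. nat (w j mod int l)) [0..<k] \<in> NL l k"
  unfolding NL_def using pl by (auto simp: prime_gt_0_nat nat_less_iff)

end



context AV begin

lemma distinct_step:
  assumes nonet: "\<And>S. finite S \<Longrightarrow> \<exists>x. f x \<le> 1 \<and> (\<forall>s\<in>S. \<not> f (x - s) < 1)"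
    and dY: "distinctY Y k"
  shows "\<exists>Y'. distinctY Y' (Suc k)"
proof -
  have Yb: "\<And>j. j < k \<Longrightarrow> f (Y j) \<le> 1" and Yd: "\<And>ns ns'. ns \<in> NL l k \<Longrightarrow> ns' \<in> NL l k \<Longrightarrow>
     f (comb Y ns - comb Y ns') < 1 \<Longrightarrow> ns = ns'" using dY unfolding distinctY_def by auto
  obtain z where z: "f z \<le> 1" "\<forall>s\<in>comb Y ` NL l k. \<not> f (z - s) < 1"
    using nonet[of "comb Y ` NL l k"] finite_NL by blast
  define Y' where "Y' = Y(k := z)"
  have pli: "prime (int l)" using pl by simp
  have "ns = ns'" if ns: "ns \<in> NL l (Suc k)" and ns': "ns' \<in> NL l (Suc k)"
    and lt: "f (comb Y' ns - comb Y' ns') < 1" for ns ns'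
  proof -
    obtain xs a where xa: "ns = xs @ [a]" "length xs = k"
      using ns unfolding NL_def by (auto simp: length_Suc_conv_rev)
    obtain xs' a' where xa': "ns' = xs' @ [a']" "length xs' = k"
      using ns' unfolding NL_def by (auto simp: length_Suc_conv_rev)
    have xsN: "xs \<in> NL l k" "a < l" using ns xa unfolding NL_def by auto
    have xsN': "xs' \<in> NL l k" "a' < l" using ns' xa' unfolding NL_def by auto
    have ceq: "comb Y' ns - comb Y' ns' = (comb Y xs - comb Y xs') + (of_nat a - of_nat a') * z"
      unfolding Y'_def xa xa' comb_snoc[OF xa(2)] comb_snoc[OF xa'(2)]
      by (simp add: algebra_simps)
    show ?thesis
    proof (cases "a = a'")
      case True
      hence "f (comb Y xs - comb Y xs') < 1" using lt ceq by simp
      hence "xs = xs'" using Yd xsN xsN' by blast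
      thus ?thesis using True xa xa' by simp
    next
      case False
      define e where "e = int a - int a'"
      have e0: "e \<noteq> 0" using False e_def by simp
      have ndvd: "\<not> int l dvd e"
      proof
        assume "int l dvd e"
        hence "\<bar>int l\<bar> \<le> \<bar>e\<bar>" using dvd_imp_le_int e0 by blast
        thus False using xsN(2) xsN'(2) e_def by simp
      qed
      have "coprime (int l) e" using prime_imp_coprime[OF pli ndvd] .
      then obtain u v where uv: "u * e + v * int l = 1" using bezout_int[of e "int l"]
        by (metis coprime_iff_gcd_eq_1 gcd.commute)
      define D where "D = comb Y xs' - comb Y xs"
      define W where "W = comb Y' ns - comb Y' ns'"
      have W: "W = of_int e * z - D" unfolding W_def D_def ceq e_def by simp
      have "(of_int u :: 'a) * of_int e + of_int v * of_nat l = 1"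
        using arg_cong[OF uv, of "of_int :: int \<Rightarrow> 'a"] by simp
      hence zeq: "z - of_int u * D = of_int u * W + of_int (v * int l) * z"
        unfolding W by (simp add: algebra_simps) (metis add_diff_cancel_left' mult.assoc mult.commute mult_1 distrib_right)
      have f1: "f (of_int u * W) < 1"
      proof -
        have "f (of_int u * W) \<le> f W" using f_int_le1[of u] by (simp add: mult_left_le_one_le)
        thus ?thesis using lt W_def by simp
      qed
      have f2: "f (of_int (v * int l) * z) < 1" using small_term[of "v * int l" z] z(1) by (simp del: mult)
      have fzD: "f (z - of_int u * D) < 1" unfolding zeq using ultra[of "of_int u * W" "of_int (v * int l) * z"] f1 f2
        by simp
      define w where "w j = u * (int (xs'!j) - int (xs!j))" for j
      have uD: "of_int u * D = (\<Sum>j<k. of_int (w j) * Y j)"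
        unfolding D_def comb_def w_def using xa(2) xa'(2)
        by (simp add: sum_subtractf[symmetric] sum_distrib_left algebra_simps)
      define zs where "zs = map (\<lambda>j. nat (w j mod int l)) [0..<k]"
      have zsN: "zs \<in> NL l k" unfolding zs_def by (rule map_in_NL)
      have f3: "f (of_int u * D - comb Y zs) < 1" unfolding uD zs_def by (rule reduce_mod) (rule Yb)
      have "z - comb Y zs = (z - of_int u * D) + (of_int u * D - comb Y zs)" by simp
      hence "f (z - comb Y zs) < 1" using ultra[of "z - of_int u * D" "of_int u * D - comb Y zs"] fzD f3
        by simp
      thus ?thesis using z(2) zsN by blast
    qed
  qed
  moreover have "\<forall>j<Suc k. f (Y' j) \<le> 1" unfolding Y'_def using Yb z(1) by (auto simp: less_Suc_eq)
  ultimately have "distinctY Y' (Suc k)" unfolding distinctY_def by blast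
  thus ?thesis by blast
qed

end



context AV begin

lemma distinct0: "distinctY Y 0"
  unfolding distinctY_def NL_def by auto

lemma no_big_distinct:
  assumes fB: "finite B" and span: "\<forall>x. \<exists>c. (\<forall>b\<in>B. c b \<in> K0) \<and> x = (\<Sum>b\<in>B. c b * b)"
    and dY: "distinctY Y (Suc (card B))"
  shows False
proof -
  define I where "I = {..<Suc (card B)}"
  have Yb: "\<And>j. j < Suc (card B) \<Longrightarrow> f (Y j) \<le> 1" and Yd: "\<And>ns ns'. ns \<in> NL l (Suc (card B)) \<Longrightarrow> ns' \<in> NL l (Suc (card B)) \<Longrightarrow>
     f (comb Y ns - comb Y ns') < 1 \<Longrightarrow> ns = ns'" using dY unfolding distinctY_def by auto
  obtain c where c: "\<forall>i\<in>I. c i \<in> K0" "\<exists>i\<in>I. c i \<noteq> 0" "(\<Sum>i\<in>I. c i * Y i) = 0"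
    using lin_dep[OF K0_0 K0_1 K0_add K0_mult K0_neg fB, of I Y] span unfolding I_def by auto
  have fI: "finite I" "I \<noteq> {}" unfolding I_def by auto
  define M where "M = Max ((\<lambda>j. f (c j)) ` I)"
  have "M \<in> (\<lambda>j. f (c j)) ` I" unfolding M_def using fI by (intro Max_in) auto
  then obtain i0 where i0: "i0 \<in> I" "f (c i0) = M" by auto
  have Mge: "\<And>j. j \<in> I \<Longrightarrow> f (c j) \<le> f (c i0)" unfolding i0(2) M_def using fI by (intro Max_ge) auto
  have ci0: "c i0 \<noteq> 0"
  proof
    assume "c i0 = 0"
    then have "\<forall>j\<in>I. c j = 0" using Mge by (metis f0 nonneg order_antisym zero_iff)
    thus False using c(2) by blast
  qed
  have fc0: "f (c i0) > 0" using ci0 by (simp add: less_le)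
  have "\<forall>e>0. \<exists>q. f (c i0 - of_rat q) < e" using c(1) i0(1) unfolding closure_of_rat_def by simp
  then obtain q where q: "f (c i0 - of_rat q) < f (c i0)" using fc0 by blast
  have fq: "f (of_rat q) = f (c i0)"
  proof -
    have "of_rat q = c i0 + (of_rat q - c i0)" by simp
    moreover have "f (of_rat q - c i0) < f (c i0)" using q commute by metis
    ultimately show ?thesis using ultra_strict by metis
  qed
  have q0: "q \<noteq> 0" using fq fc0 by auto
  define d where "d j = c j / of_rat q" for j
  have dK: "\<And>j. j \<in> I \<Longrightarrow> d j \<in> K0" unfolding d_def using c(1) K0_div_rat q0 by blast
  have db: "\<And>j. j \<in> I \<Longrightarrow> f (d j) \<le> 1" unfolding d_def using Mge fq fc0 by simp
  have di0: "f (d i0) = 1" unfolding d_def using fq fc0 ci0 by simp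
  have "\<forall>j\<in>I. \<exists>n::int. f (d j - of_int n) < 1" using int_approx dK db by blast
  then obtain n where n: "\<And>j. j \<in> I \<Longrightarrow> f (d j - of_int (n j)) < 1" by metis
  define ns where "ns = map (\<lambda>j. nat (n j mod int l)) [0..<Suc (card B)]"
  have nsN: "ns \<in> NL l (Suc (card B))" unfolding ns_def by (rule map_in_NL)
  have zN: "replicate (Suc (card B)) 0 \<in> NL l (Suc (card B))" unfolding NL_def using pl
    by (auto simp: prime_gt_0_nat)
  have sumd: "(\<Sum>j\<in>I. d j * Y j) = 0"
    unfolding d_def using c(3) by (simp add: sum_divide_distrib[symmetric] algebra_simps)
  have "f ((\<Sum>j<Suc (card B). of_int (n j) * Y j) - comb Y ns) < 1"
    unfolding ns_def by (rule reduce_mod) (rule Yb)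
  moreover have "f ((\<Sum>j<Suc (card B). of_int (n j) * Y j) - 0) < 1"
  proof -
    have "(\<Sum>j<Suc (card B). of_int (n j) * Y j) - 0 = (\<Sum>j\<in>I. of_int (n j) * Y j) - (\<Sum>j\<in>I. d j * Y j)"
      using sumd unfolding I_def by simp
    also have "\<dots> = (\<Sum>j\<in>I. (of_int (n j) - d j) * Y j)"
      by (simp add: sum_subtractf[symmetric] left_diff_distrib)
    also have "f \<dots> < 1"
    proof (rule sum_lt)
      fix j assume j: "j \<in> I"
      have a: "f (of_int (n j) - d j) < 1" using n[OF j] commute by metis
      have b: "f (Y j) \<le> 1" using Yb j unfolding I_def by simp
      have "f (of_int (n j) - d j) * f (Y j) \<le> f (of_int (n j) - d j)"
        by (rule mult_right_le_one_le) (simp_all add: b)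
      thus "f ((of_int (n j) - d j) * Y j) < 1" using a by simp
    qed simp
    finally show ?thesis .
  qed
  ultimately have "f (comb Y ns - comb Y (replicate (Suc (card B)) 0)) < 1"
  proof -
    assume h1: "f ((\<Sum>j<Suc (card B). of_int (n j) * Y j) - comb Y ns) < 1"
      and h2: "f ((\<Sum>j<Suc (card B). of_int (n j) * Y j) - 0) < 1"
    have "comb Y ns - comb Y (replicate (Suc (card B)) 0) =
      ((\<Sum>j<Suc (card B). of_int (n j) * Y j) - 0) - ((\<Sum>j<Suc (card B). of_int (n j) * Y j) - comb Y ns)"
      unfolding comb_zero by simp
    thus ?thesis using ultra_diff[of "(\<Sum>j<Suc (card B). of_int (n j) * Y j) - 0" "(\<Sum>j<Suc (card B). of_int (n j) * Y j) - comb Y ns"] h1 h2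
      by simp
  qed
  hence nsz: "ns = replicate (Suc (card B)) 0" using Yd nsN zN by blast
  have i0l: "i0 < Suc (card B)" using i0(1) unfolding I_def by simp
  have "ns ! i0 = nat (n i0 mod int l)" unfolding ns_def using i0l by (simp del: upt_Suc)
  moreover have "ns ! i0 = 0" unfolding nsz using i0l nth_replicate[OF i0l, of 0] by (simp del: replicate_Suc)
  ultimately have "nat (n i0 mod int l) = 0" by simp
  hence "int l dvd n i0" using pl by (simp add: prime_gt_0_nat dvd_eq_mod_eq_0 nat_eq_iff)
  hence fn: "f (of_int (n i0)) < 1" by (rule f_ldvd)
  have e: "of_int (n i0) = d i0 + (of_int (n i0) - d i0)" by simp
  have "f (of_int (n i0) - d i0) < 1" using n[OF i0(1)] commute by metis
  hence "f (of_int (n i0) - d i0) < f (d i0)" using di0 by simp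
  hence "f (d i0 + (of_int (n i0) - d i0)) = f (d i0)" by (rule ultra_strict)
  hence "f (of_int (n i0)) = 1" using e di0 by simp
  thus False using fn by simp
qed

lemma net:
  assumes fd: "finite_dim_over K0"
  shows "\<exists>S. finite S \<and> (\<forall>x. f x \<le> 1 \<longrightarrow> (\<exists>s\<in>S. f (x - s) < 1))"
proof (rule ccontr)
  assume "\<not> ?thesis"
  hence nonet: "\<And>S. finite S \<Longrightarrow> \<exists>x. f x \<le> 1 \<and> (\<forall>s\<in>S. \<not> f (x - s) < 1)" by blast
  obtain B where B: "finite B" "\<forall>x. \<exists>c. (\<forall>b\<in>B. c b \<in> K0) \<and> x = (\<Sum>b\<in>B. c b * b)"
    using fd unfolding finite_dim_over_def by blast
  have "\<exists>Y. distinctY Y k" for k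
  proof (induction k)
    case 0 show ?case using distinct0 by blast
  next
    case (Suc k)
    then obtain Y where "distinctY Y k" by blast
    from distinct_step[OF nonet this] show ?case by blast
  qed
  then obtain Y where "distinctY Y (Suc (card B))" by blast
  from no_big_distinct[OF B this] show False .
qed

end



lemma quot_card:
  assumes bij: "bij_betw h A B"
    and rel: "\<And>a a'. a \<in> A \<Longrightarrow> a' \<in> A \<Longrightarrow> (E1 a = E1 a') \<longleftrightarrow> (E2 (h a) = E2 (h a'))"
    and fin: "finite (E2 ` B)"
  shows "finite (E1 ` A) \<and> card (E1 ` A) = card (E2 ` B)"
proof -
  define rep where "rep X = (SOME a. a \<in> A \<and> E1 a = X)" for X
  have rep: "rep X \<in> A \<and> E1 (rep X) = X" if "X \<in> E1 ` A" for X
    unfolding rep_def using that by (rule imageE) (rule someI, blast)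
  define F where "F X = E2 (h (rep X))" for X
  have img: "F ` (E1 ` A) = E2 ` B"
  proof
    show "F ` E1 ` A \<subseteq> E2 ` B" using rep bij unfolding F_def bij_betw_def by auto
    show "E2 ` B \<subseteq> F ` E1 ` A"
    proof
      fix Y assume "Y \<in> E2 ` B"
      then obtain b where b: "b \<in> B" "Y = E2 b" by blast
      then obtain a where a: "a \<in> A" "h a = b" using bij unfolding bij_betw_def by auto
      have "E1 a \<in> E1 ` A" using a by blast
      hence "rep (E1 a) \<in> A" "E1 (rep (E1 a)) = E1 a" using rep by auto
      hence "E2 (h (rep (E1 a))) = E2 (h a)" using rel a(1) by blast
      thus "Y \<in> F ` E1 ` A" unfolding F_def using a b \<open>E1 a \<in> E1 ` A\<close> by force
    qed
  qed
  have inj: "inj_on F (E1 ` A)"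
  proof (rule inj_onI)
    fix X X' assume X: "X \<in> E1 ` A" and X': "X' \<in> E1 ` A" and eq: "F X = F X'"
    have "E1 (rep X) = E1 (rep X')" using rel rep[OF X] rep[OF X'] eq unfolding F_def by blast
    thus "X = X'" using rep[OF X] rep[OF X'] by simp
  qed
  have "finite (E1 ` A)" using inj img fin finite_imageD by metis
  moreover have "card (E1 ` A) = card (E2 ` B)" using card_image[OF inj] img by simp
  ultimately show ?thesis by simp
qed

lemma coset_eq:
  fixes H :: "'a::field set"
  assumes H1: "1 \<in> H" and Hm: "\<And>a b. a \<in> H \<Longrightarrow> b \<in> H \<Longrightarrow> a * b \<in> H"
    and Hi: "\<And>a. a \<in> H \<Longrightarrow> inverse a \<in> H"
    and x: "x \<noteq> 0" and x': "x' \<noteq> 0"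
  shows "((\<lambda>c. x * c) ` H = (\<lambda>c. x' * c) ` H) \<longleftrightarrow> x' / x \<in> H"
proof
  assume eq: "(\<lambda>c. x * c) ` H = (\<lambda>c. x' * c) ` H"
  have "x' \<in> (\<lambda>c. x' * c) ` H" using H1 by force
  then obtain c where "c \<in> H" "x' = x * c" using eq by auto
  thus "x' / x \<in> H" using x by simp
next
  assume q: "x' / x \<in> H"
  have qi: "x / x' \<in> H" using Hi[OF q] by (simp add: inverse_eq_divide)
  show "(\<lambda>c. x * c) ` H = (\<lambda>c. x' * c) ` H"
  proof
    show "(\<lambda>c. x * c) ` H \<subseteq> (\<lambda>c. x' * c) ` H"
    proof
      fix y assume "y \<in> (\<lambda>c. x * c) ` H"
      then obtain c where c: "c \<in> H" "y = x * c" by blast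
      have "y = x' * (x / x' * c)" using c x' by simp
      thus "y \<in> (\<lambda>c. x' * c) ` H" using Hm[OF qi c(1)] by blast
    qed
    show "(\<lambda>c. x' * c) ` H \<subseteq> (\<lambda>c. x * c) ` H"
    proof
      fix y assume "y \<in> (\<lambda>c. x' * c) ` H"
      then obtain c where c: "c \<in> H" "y = x' * c" by blast
      have "y = x * (x' / x * c)" using c x by simp
      thus "y \<in> (\<lambda>c. x * c) ` H" using Hm[OF q c(1)] by blast
    qed
  qed
qed

lemma L1: "(1::'a::field) - y \<noteq> 0 \<Longrightarrow> (1 + y)/(1 - y) - 1 = 2*y/(1-y)"
  by (simp add: field_simps)
lemma L2: "(1::'a::field_char_0) - y \<noteq> 0 \<Longrightarrow> 1 + y \<noteq> 0 \<Longrightarrow> ((1+y)/(1-y) - 1)/((1+y)/(1-y) + 1) = y"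
proof -
  assume a: "(1::'a) - y \<noteq> 0" "1 + y \<noteq> 0"
  have e1: "(1+y)/(1-y) - 1 = 2*y/(1-y)" using a by (simp add: field_simps)
  have e2: "(1+y)/(1-y) + 1 = 2/(1-y)" using a by (simp add: field_simps)
  show ?thesis unfolding e1 e2 using a by simp
qed
lemma L3: "(x::'a::field_char_0) + 1 \<noteq> 0 \<Longrightarrow> (1 + (x-1)/(x+1))/(1 - (x-1)/(x+1)) = x"
proof -
  assume a: "x + 1 \<noteq> 0"
  have e1: "1 + (x-1)/(x+1) = 2*x/(x+1)" using a by (simp add: field_simps)
  have e2: "1 - (x-1)/(x+1) = 2/(x+1)" using a by (simp add: field_simps)
  show ?thesis unfolding e1 e2 using a by simp
qed
lemma L4: "(x::'a::field) + 1 \<noteq> 0 \<Longrightarrow> x' + 1 \<noteq> 0 \<Longrightarrow> (x-1)/(x+1) - (x'-1)/(x'+1) = 2*(x - x')/((x+1)*(x'+1))"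
  by (simp add: field_simps)
lemma L5: "(a::'a::field) \<noteq> 0 \<Longrightarrow> inverse a - 1 = (1 - a)/a"
  by (simp add: field_simps)
lemma L7: "(a::'a::field) \<noteq> 0 \<Longrightarrow> inverse a + 1 = (a + 1)/a"
  by (simp add: field_simps)
lemma L8: "(a::'a::field) \<noteq> 0 \<Longrightarrow> b \<noteq> 0 \<Longrightarrow> a / b * (b / a) = 1"
  by simp
lemma L6: "(x::'a::field) \<noteq> 0 \<Longrightarrow> x'/x - 1 = (x'-x)/x"
  by (simp add: field_simps)

locale MAIN = AV f l for f :: "'a::field_char_0 \<Rightarrow> real" and l +
  fixes t :: "'a \<Rightarrow> 'a" and lam :: 'a
  assumes aut: "field_aut_order2 t" and unif: "is_uniformizer f t lam"
begin

lemma t_add[simp]: "t (x + y) = t x + t y" using aut unfolding field_aut_order2_def by auto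
lemma t_mult[simp]: "t (x * y) = t x * t y" using aut unfolding field_aut_order2_def by auto
lemma t_1[simp]: "t 1 = 1" using aut unfolding field_aut_order2_def by auto
lemma t_t[simp]: "t (t x) = x"
  using aut unfolding field_aut_order2_def by (metis comp_apply id_apply)
lemma t_0[simp]: "t 0 = 0" using t_add[of 0 0] by simp
lemma t_neg[simp]: "t (- x) = - t x"
proof -
  have "t x + t (-x) = 0" using t_add[of x "-x"] by simp
  thus ?thesis by (metis neg_eq_iff_add_eq_0)
qed
lemma t_diff[simp]: "t (x - y) = t x - t y" using t_add[of x "-y"] by simp
lemma t_inv[simp]: "t (inverse x) = inverse (t x)"
proof (cases "x = 0")
  case False
  have "t x * t (inverse x) = 1" using t_mult[of x "inverse x"] False by (simp del: t_mult)
  thus ?thesis using inverse_unique by metis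
qed simp
lemma t_div[simp]: "t (x / y) = t x / t y" by (simp add: divide_inverse)
lemma t_nat[simp]: "t (of_nat n) = of_nat n" by (induction n) auto
lemma t_2[simp]: "t 2 = 2" using t_nat[of 2] by simp
lemma t_pow[simp]: "t (x ^ n) = t x ^ n" by (induction n) auto
lemma t_nonid: "\<exists>z. t z \<noteq> z" using aut unfolding field_aut_order2_def by (metis eq_id_iff)

abbreviation "Ot \<equiv> int_ring_fixed f t"

lemma O_iff: "x \<in> Ot \<longleftrightarrow> t x = x \<and> f x \<le> 1"
  unfolding int_ring_fixed_def fixed_field_def by simp

lemma lamO: "lam \<in> Ot" using unif unfolding is_uniformizer_def by simp
lemma maxid: "{y \<in> Ot. f y < 1} = {lam * z | z. z \<in> Ot}" using unif unfolding is_uniformizer_def by simp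

lemma O_diff: "x \<in> Ot \<Longrightarrow> y \<in> Ot \<Longrightarrow> x - y \<in> Ot"
  unfolding O_iff using ultra_diff[of x y] by auto

lemma O_1: "1 \<in> Ot" unfolding O_iff by simp

lemma in_max: "y \<in> Ot \<Longrightarrow> (\<exists>z\<in>Ot. y = lam * z) \<longleftrightarrow> f y < 1"
  using maxid by blast

lemma rho_lt1: "f lam < 1"
  using in_max[OF lamO] O_1 by (metis mult_1_right)

lemma small: "b \<in> Ot \<Longrightarrow> f b < 1 \<Longrightarrow> f b \<le> f lam"
proof -
  assume b: "b \<in> Ot" "f b < 1"
  then obtain z where z: "z \<in> Ot" "b = lam * z" using in_max by blast
  hence "f z \<le> 1" using O_iff by blast
  thus ?thesis using z(2) by (simp add: mult_left_le)
qed

lemma lam_nz: "lam \<noteq> 0"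
proof
  assume l0: "lam = 0"
  have "of_nat l \<in> Ot" unfolding O_iff using f_nat_le1 by simp
  then obtain z where "of_nat l = lam * z" using in_max f_l_lt1 by blast
  hence "(of_nat l :: 'a) = 0" using l0 by simp
  thus False using pl by (simp add: prime_gt_0_nat)
qed

lemma rho_pos: "f lam > 0" using lam_nz by (simp add: less_le)


lemma exists_w:
  assumes r: "r > 0"
  shows "\<exists>w. t w = - w \<and> w \<noteq> 0 \<and> f lam * r < f w \<and> f w \<le> r"
proof -
  obtain z where z: "t z \<noteq> z" using t_nonid by blast
  define \<delta> where "\<delta> = z - t z"
  have d0: "\<delta> \<noteq> 0" and td: "t \<delta> = - \<delta>" unfolding \<delta>_def using z by auto
  have fd: "f \<delta> > 0" using d0 by (simp add: less_le)
  have tl: "t lam = lam" using lamO O_iff by blast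
  obtain M where M: "f lam ^ M < f \<delta> / r" using real_arch_pow_inv[of "f \<delta> / r" "f lam"] fd r rho_lt1 by auto
  define \<delta>' where "\<delta>' = \<delta> / lam ^ M"
  have td': "t \<delta>' = - \<delta>'" unfolding \<delta>'_def using td tl by simp
  have fd': "f \<delta>' > r" unfolding \<delta>'_def using M rho_pos r by (simp add: field_simps)
  have d'0: "\<delta>' \<noteq> 0" using fd' r by auto
  have ex: "\<exists>N. f (\<delta>' * lam ^ N) \<le> r"
  proof -
    obtain N where N: "f lam ^ N < r / f \<delta>'" using real_arch_pow_inv[of "r / f \<delta>'" "f lam"] fd' r rho_lt1 by auto
    hence "f (\<delta>' * lam ^ N) < r" using fd' r by (simp add: field_simps)
    thus ?thesis by (intro exI[of _ N]) simp
  qed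
  define N where "N = (LEAST N. f (\<delta>' * lam ^ N) \<le> r)"
  have N1: "f (\<delta>' * lam ^ N) \<le> r" unfolding N_def using LeastI_ex[OF ex] .
  have N0: "N \<noteq> 0"
  proof
    assume "N = 0" thus False using N1 fd' by simp
  qed
  then obtain N' where N': "N = Suc N'" by (cases N) auto
  have "\<not> f (\<delta>' * lam ^ N') \<le> r" using not_less_Least[of N' "\<lambda>N. f (\<delta>' * lam ^ N) \<le> r"] N' N_def by simp
  hence gt: "f (\<delta>' * lam ^ N') > r" by simp
  define w where "w = \<delta>' * lam ^ N"
  have "f w = f lam * f (\<delta>' * lam ^ N')" unfolding w_def N' by simp
  hence "f w > f lam * r" using gt rho_pos by simp
  moreover have "t w = - w" unfolding w_def using td' tl by simp
  moreover have "w \<noteq> 0" unfolding w_def using d'0 lam_nz by simp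
  ultimately show ?thesis using N1 w_def by blast
qed

lemma scale_a:
  assumes w: "f lam * r < f w" "f w \<le> r" and b: "t b = b"
  shows "f b \<le> 1 \<longleftrightarrow> f (w * b) \<le> r"
proof
  assume "f b \<le> 1"
  hence "f w * f b \<le> f w" by (intro mult_right_le_one_le) auto
  thus "f (w * b) \<le> r" using w by simp
next
  assume wb: "f (w * b) \<le> r"
  show "f b \<le> 1"
  proof (rule ccontr)
    assume "\<not> f b \<le> 1"
    hence fb: "f b > 1" by simp
    have b0: "b \<noteq> 0" using fb by auto
    have "inverse b \<in> Ot" unfolding O_iff using b fb by (simp add: inverse_le_1_iff)
    moreover have "f (inverse b) < 1" using fb by (simp add: inverse_less_1_iff)
    ultimately have "f (inverse b) \<le> f lam" using small by blast
    hence "inverse (f b) \<le> f lam" by simp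
    hence "1 \<le> f lam * f b" using fb by (simp add: field_simps)
    hence "f w * 1 \<le> f w * (f lam * f b)" by (intro mult_left_mono) auto
    hence "f w \<le> f lam * (f w * f b)" by (simp add: mult.commute mult.left_commute)
    also have "\<dots> \<le> f lam * r" using wb rho_pos by simp
    finally show False using w by simp
  qed
qed

lemma scale_b:
  assumes w: "f lam * r < f w" "f w \<le> r" and b: "t b = b"
  shows "f b < 1 \<longleftrightarrow> f (w * b) \<le> f lam * r"
proof
  assume fb: "f b < 1"
  hence "b \<in> Ot" unfolding O_iff using b by simp
  hence "f b \<le> f lam" using small fb by blast
  moreover have "r \<ge> 0" using w nonneg[of w] by linarith
  ultimately have "f w * f b \<le> r * f lam" using w by (intro mult_mono) auto
  thus "f (w * b) \<le> f lam * r" by (simp add: mult.commute)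
next
  assume "f (w * b) \<le> f lam * r"
  hence "f w * f b < f w * 1" using w by simp
  moreover have "f w > 0" using w rho_pos nonneg[of w]
    by (smt (verit) mult_nonneg_nonneg)
  ultimately show "f b < 1" by (simp add: mult_less_cancel_left_pos)
qed


lemma class_iff: "y \<in> Ot \<Longrightarrow> b \<in> Ot \<Longrightarrow> (\<exists>z\<in>Ot. y - b = lam * z) \<longleftrightarrow> f (y - b) < 1"
  using in_max[OF O_diff] by blast

lemma class_eq:
  assumes b: "b \<in> Ot" and b': "b' \<in> Ot"
  shows "({y \<in> Ot. \<exists>z\<in>Ot. y - b = lam * z} = {y \<in> Ot. \<exists>z\<in>Ot. y - b' = lam * z}) \<longleftrightarrow> f (b - b') < 1"
proof -
  have eq: "\<And>c. c \<in> Ot \<Longrightarrow> {y \<in> Ot. \<exists>z\<in>Ot. y - c = lam * z} = {y \<in> Ot. f (y - c) < 1}"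
    using class_iff by blast
  have "({y \<in> Ot. f (y - b) < 1} = {y \<in> Ot. f (y - b') < 1}) \<longleftrightarrow> f (b - b') < 1"
  proof
    assume "{y \<in> Ot. f (y - b) < 1} = {y \<in> Ot. f (y - b') < 1}"
    moreover have "b \<in> {y \<in> Ot. f (y - b) < 1}" using b by simp
    ultimately show "f (b - b') < 1" by blast
  next
    assume bb: "f (b - b') < 1"
    have "f (y - b) < 1 \<longleftrightarrow> f (y - b') < 1" for y
    proof -
      have "f (y - b') \<le> max (f (y - b)) (f (b - b'))" using ultra[of "y - b" "b - b'"] by simp
      moreover have "f (y - b) \<le> max (f (y - b')) (f (b - b'))" using ultra[of "y - b'" "b' - b"] commute[of b b'] by simp
      ultimately show ?thesis using bb by auto
    qed
    thus "{y \<in> Ot. f (y - b) < 1} = {y \<in> Ot. f (y - b') < 1}" by blast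
  qed
  thus ?thesis using eq[OF b] eq[OF b'] by simp
qed

lemma residue_finite:
  assumes net: "\<exists>S. finite S \<and> (\<forall>x. f x \<le> 1 \<longrightarrow> (\<exists>s\<in>S. f (x - s) < 1))"
  shows "finite (residue_classes f t lam)"
proof -
  obtain S where S: "finite S" "\<forall>x. f x \<le> 1 \<longrightarrow> (\<exists>s\<in>S. f (x - s) < 1)" using net by blast
  have "residue_classes f t lam \<subseteq> (\<lambda>s. {y \<in> Ot. f (y - s) < 1}) ` S"
  proof
    fix X assume "X \<in> residue_classes f t lam"
    then obtain b where b: "b \<in> Ot" "X = {y \<in> Ot. \<exists>z\<in>Ot. y - b = lam * z}"
      unfolding residue_classes_def by blast
    have Xe: "X = {y \<in> Ot. f (y - b) < 1}" using b class_iff by blast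
    obtain s where s: "s \<in> S" "f (b - s) < 1" using S(2) b(1) O_iff by blast
    have "f (y - b) < 1 \<longleftrightarrow> f (y - s) < 1" for y
    proof -
      have "f (y - s) \<le> max (f (y - b)) (f (b - s))" using ultra[of "y - b" "b - s"] by simp
      moreover have "f (y - b) \<le> max (f (y - s)) (f (b - s))" using ultra[of "y - s" "s - b"] commute[of b s] by simp
      ultimately show ?thesis using s(2) by auto
    qed
    hence "X = {y \<in> Ot. f (y - s) < 1}" using Xe by blast
    thus "X \<in> (\<lambda>s. {y \<in> Ot. f (y - s) < 1}) ` S" using s(1) by blast
  qed
  thus ?thesis using S(1) finite_subset by blast
qed


lemma main_n:
  assumes hn: "f lam ^ n < f 2"
    and fin: "finite (residue_classes f t lam)"
  shows "finite (Cquot f t lam n) \<and> card (Cquot f t lam n) = card (residue_classes f t lam)"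
proof -
  define \<rho> where "\<rho> = f lam"
  define s where "s = f 2"
  have s0: "s > 0" unfolding s_def by (simp add: less_le)
  define r where "r = \<rho> ^ n / s"
  have r0: "r > 0" unfolding r_def \<rho>_def using s0 rho_pos by simp
  have r1: "r < 1" unfolding r_def \<rho>_def s_def using hn s0 s_def by simp
  obtain w where w: "t w = - w" "w \<noteq> 0" "\<rho> * r < f w" "f w \<le> r"
    using exists_w[OF r0] unfolding \<rho>_def by blast
  define C where "C = Cfilt f t lam n"
  define H where "H = Cfilt f t lam (Suc n)"
  have Cmem: "x \<in> C \<longleftrightarrow> f x = 1 \<and> x * t x = 1 \<and> f (x - 1) \<le> \<rho> ^ n" for x
    unfolding C_def Cfilt_def Cgrp_def \<rho>_def by auto
  have Hmem: "x \<in> H \<longleftrightarrow> f x = 1 \<and> x * t x = 1 \<and> f (x - 1) \<le> \<rho> ^ Suc n" for x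
    unfolding H_def Cfilt_def Cgrp_def \<rho>_def by auto
  have xp1: "f (x + 1) = s" if x: "x \<in> C" for x
  proof -
    have "f (x - 1) < f 2" using x Cmem hn \<rho>_def by fastforce
    hence "f (2 + (x - 1)) = f 2" by (rule ultra_strict)
    thus ?thesis unfolding s_def by (simp add: add.commute)
  qed
  have xp1nz: "x + 1 \<noteq> 0" if "x \<in> C" for x using xp1[OF that] s0 by auto
  have xnz: "x \<noteq> 0" if "x \<in> C" for x using that Cmem by auto
  have tx: "t x = inverse x" if "x \<in> C" for x
    using that Cmem xnz[OF that] by (metis inverse_unique)
  define phi where "phi x = (x - 1) / (x + 1)" for x :: 'a
  have tphi: "t (phi x) = - phi x" if x: "x \<in> C" for x
  proof -
    have "t (phi x) = (inverse x - 1) / (inverse x + 1)" unfolding phi_def using tx[OF x] by simp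
    also have "\<dots> = ((1 - x) / x) / ((x + 1) / x)"
      unfolding L5[OF xnz[OF x]] L7[OF xnz[OF x]] ..
    also have "\<dots> = (1 - x) / (x + 1)" using xnz[OF x] by simp
    also have "\<dots> = - phi x" unfolding phi_def by (simp add: minus_divide_left)
    finally show ?thesis .
  qed
  have fphi: "f (phi x) = f (x - 1) / s" if x: "x \<in> C" for x
    unfolding phi_def using xp1[OF x] by simp
  define hm where "hm x = phi x / w" for x :: 'a
  have whm: "w * hm x = phi x" for x unfolding hm_def using w(2) by simp
  have thx: "t (hm x) = hm x" if x: "x \<in> C" for x
    unfolding hm_def using tphi[OF x] w(1) by simp
  have hmO: "hm x \<in> Ot" if x: "x \<in> C" for x
  proof -
    have "f (w * hm x) \<le> r" unfolding whm fphi[OF x] r_def using x Cmem s0 by (simp add: divide_right_mono)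
    hence "f (hm x) \<le> 1" using scale_a[OF w(3)[unfolded \<rho>_def] w(4) thx[OF x]] by simp
    thus ?thesis unfolding O_iff using thx[OF x] by simp
  qed
  define g where "g b = (1 + w * b) / (1 - w * b)" for b :: 'a
  have ybnd: "f (w * b) \<le> r" "t (w * b) = - (w * b)" if b: "b \<in> Ot" for b
  proof -
    show "f (w * b) \<le> r" using scale_a[OF w(3)[unfolded \<rho>_def] w(4)] b O_iff by blast
    show "t (w * b) = - (w * b)" using w(1) b O_iff by simp
  qed
  have f1py: "f (1 + w * b) = 1" "f (1 - w * b) = 1" if b: "b \<in> Ot" for b
  proof -
    have "f (w * b) < f 1" using ybnd(1)[OF b] r1 by simp
    thus "f (1 + w * b) = 1" using ultra_strict by simp
    have "f (- (w * b)) < f 1" using ybnd(1)[OF b] r1 by simp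
    thus "f (1 - w * b) = 1" using ultra_strict[of "- (w * b)" 1] by simp
  qed
  have nz1: "1 + w * b \<noteq> 0" "1 - w * b \<noteq> 0" if b: "b \<in> Ot" for b
    using f1py[OF b] by auto
  have gC: "g b \<in> C" if b: "b \<in> Ot" for b
  proof -
    have fg: "f (g b) = 1" unfolding g_def using f1py[OF b] by simp
    have "t (g b) = (1 + t (w * b)) / (1 - t (w * b))" unfolding g_def by (simp only: t_div t_add t_diff t_1)
    also have "\<dots> = (1 - w * b) / (1 + w * b)" unfolding ybnd(2)[OF b] by simp
    finally have "g b * t (g b) = (1 + w * b) / (1 - w * b) * ((1 - w * b) / (1 + w * b))" unfolding g_def by simp
    hence pr: "g b * t (g b) = 1" using L8 nz1[OF b] by metis
    have "g b - 1 = 2 * (w * b) / (1 - w * b)" unfolding g_def using L1 nz1[OF b] by blast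
    hence "f (g b - 1) = s * f (w * b)" using f1py[OF b] s_def by simp
    also have "\<dots> \<le> s * r" using ybnd(1)[OF b] s0 by simp
    also have "\<dots> = \<rho> ^ n" unfolding r_def using s0 by simp
    finally show ?thesis unfolding Cmem using fg pr by simp
  qed
  have hg: "hm (g b) = b" if b: "b \<in> Ot" for b
  proof -
    have "phi (g b) = w * b" unfolding phi_def g_def using L2 nz1[OF b] by blast
    thus ?thesis unfolding hm_def using w(2) by simp
  qed
  have gh: "g (hm x) = x" if x: "x \<in> C" for x
  proof -
    have "g (hm x) = (1 + phi x) / (1 - phi x)" unfolding g_def whm ..
    also have "\<dots> = x" unfolding phi_def using L3 xp1nz[OF x] by blast
    finally show ?thesis .
  qed
  have bij: "bij_betw hm C Ot"
    by (rule bij_betw_byWitness[of _ g]) (use gh hg hmO gC in auto)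
  have rel_h: "f (x - x') \<le> \<rho> ^ Suc n \<longleftrightarrow> f (hm x - hm x') < 1" if x: "x \<in> C" and x': "x' \<in> C" for x x'
  proof -
    define D where "D = hm x - hm x'"
    have tD: "t D = D" unfolding D_def using thx[OF x] thx[OF x'] by simp
    have "w * D = phi x - phi x'" unfolding D_def using whm by (simp add: right_diff_distrib)
    also have "\<dots> = 2 * (x - x') / ((x + 1) * (x' + 1))" unfolding phi_def using xp1nz[OF x] xp1nz[OF x']
      by (rule L4)
    finally have wD: "w * D = 2 * (x - x') / ((x + 1) * (x' + 1))" .
    have "f (w * D) = f 2 * f (x - x') / (f (x + 1) * f (x' + 1))" unfolding wD by (simp only: divide mult)
    also have "\<dots> = s * f (x - x') / (s * s)" using xp1[OF x] xp1[OF x'] s_def by simp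
    also have "\<dots> = f (x - x') / s" using s0 by simp
    finally have "f (w * D) = f (x - x') / s" .
    hence "f D < 1 \<longleftrightarrow> f (x - x') / s \<le> \<rho> * r"
      using scale_b[OF w(3)[unfolded \<rho>_def] w(4) tD] \<rho>_def by simp
    also have "\<rho> * r = \<rho> ^ Suc n / s" unfolding r_def by simp
    also have "f (x - x') / s \<le> \<rho> ^ Suc n / s \<longleftrightarrow> f (x - x') \<le> \<rho> ^ Suc n" using s0 by (simp add: divide_le_cancel)
    finally show ?thesis unfolding D_def by simp
  qed
  have H1: "1 \<in> H" unfolding Hmem \<rho>_def using rho_pos by simp
  have Hm: "a * b \<in> H" if a: "a \<in> H" and b: "b \<in> H" for a b
  proof -
    have "a * b * t (a * b) = (a * t a) * (b * t b)" by (simp add: algebra_simps)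
    moreover have "a * t a = 1" "b * t b = 1" using a b Hmem by auto
    ultimately have pr: "a * b * t (a * b) = 1" by simp
    have e: "a * b - 1 = a * (b - 1) + (a - 1)" by (simp add: algebra_simps)
    have m: "f (a * b - 1) \<le> max (f (a * (b - 1))) (f (a - 1))" unfolding e by (rule ultra)
    have fa: "f a = 1" "f (a - 1) \<le> \<rho> ^ Suc n" using a unfolding Hmem by auto
    have fb: "f (b - 1) \<le> \<rho> ^ Suc n" using b unfolding Hmem by auto
    have "f (a * (b - 1)) = f (b - 1)" using fa(1) by simp
    have m2: "f (a * b - 1) \<le> max (f (b - 1)) (f (a - 1))" using m fa(1) by simp
    have "f (a * b - 1) \<le> \<rho> ^ Suc n" using order_trans[OF m2 max.boundedI[OF fb fa(2)]] .
    moreover have "f (a * b) = 1" using fa(1) b unfolding Hmem by simp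
    ultimately show ?thesis unfolding Hmem using pr by simp
  qed
  have Hi: "inverse a \<in> H" if a: "a \<in> H" for a
  proof -
    have a0: "a \<noteq> 0" using a Hmem by auto
    have ha: "f a = 1" "a * t a = 1" "f (a - 1) \<le> \<rho> ^ Suc n" using a unfolding Hmem by auto
    have "inverse a * t (inverse a) = inverse (a * t a)" by simp
    hence pr: "inverse a * t (inverse a) = 1" using ha(2) by simp
    have "inverse a - 1 = (1 - a) / a" using a0 by (rule L5)
    hence "f (inverse a - 1) = f (1 - a) / f a" by simp
    hence "f (inverse a - 1) = f (a - 1)" using ha(1) commute[of 1 a] by simp
    moreover have "f (inverse a) = 1" using ha(1) by simp
    ultimately show ?thesis unfolding Hmem using ha(3) pr by simp
  qed
  have rel_c: "x' / x \<in> H \<longleftrightarrow> f (x - x') \<le> \<rho> ^ Suc n" if x: "x \<in> C" and x': "x' \<in> C" for x x'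
  proof -
    have hx: "f x = 1" "x * t x = 1" using x unfolding Cmem by auto
    have hx': "f x' = 1" "x' * t x' = 1" using x' unfolding Cmem by auto
    have "x' / x * t (x' / x) = (x' * t x') / (x * t x)" by simp
    hence pr: "x' / x * t (x' / x) = 1" using hx(2) hx'(2) by simp
    have f1: "f (x' / x) = 1" using hx(1) hx'(1) by simp
    have "x' / x - 1 = (x' - x) / x" using xnz[OF x] by (rule L6)
    hence "f (x' / x - 1) = f (x' - x) / f x" by simp
    hence "f (x' / x - 1) = f (x - x')" using hx(1) commute[of x' x] by simp
    thus ?thesis unfolding Hmem using pr f1 by (simp only: simp_thms)
  qed
  have "finite ((\<lambda>x. (\<lambda>c. x * c) ` H) ` C) \<and>
      card ((\<lambda>x. (\<lambda>c. x * c) ` H) ` C) = card ((\<lambda>b. {y \<in> Ot. \<exists>z\<in>Ot. y - b = lam * z}) ` Ot)"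
  proof (rule quot_card[OF bij])
    fix a a' assume a: "a \<in> C" and a': "a' \<in> C"
    have "((\<lambda>c. a * c) ` H = (\<lambda>c. a' * c) ` H) \<longleftrightarrow> a' / a \<in> H"
      by (rule coset_eq[OF H1 Hm Hi xnz[OF a] xnz[OF a']])
    also have "\<dots> \<longleftrightarrow> f (hm a - hm a') < 1" using rel_c[OF a a'] rel_h[OF a a'] by simp
    also have "\<dots> \<longleftrightarrow> ({y \<in> Ot. \<exists>z\<in>Ot. y - hm a = lam * z} = {y \<in> Ot. \<exists>z\<in>Ot. y - hm a' = lam * z})"
      using class_eq[OF hmO[OF a] hmO[OF a']] by simp
    finally show "((\<lambda>c. a * c) ` H = (\<lambda>c. a' * c) ` H) \<longleftrightarrow>
      ({y \<in> Ot. \<exists>z\<in>Ot. y - hm a = lam * z} = {y \<in> Ot. \<exists>z\<in>Ot. y - hm a' = lam * z})" .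
  next
    show "finite ((\<lambda>b. {y \<in> Ot. \<exists>z\<in>Ot. y - b = lam * z}) ` Ot)"
      using fin unfolding residue_classes_def .
  qed
  thus ?thesis unfolding Cquot_def residue_classes_def C_def H_def .
qed

end

theorem lemma6p2:
  fixes l :: nat and f :: "'a::field_char_0 \<Rightarrow> real" and t :: "'a \<Rightarrow> 'a" and lam :: 'a
  assumes "prime l"
    and "finite_ext_Ql l f"
    and "field_aut_order2 t"
    and "is_uniformizer f t lam"
  shows "(l \<noteq> 2 \<longrightarrow> (\<forall>n::nat. n \<ge> 1 \<longrightarrow>
            finite (Cquot f t lam n) \<and> card (Cquot f t lam n) = card (residue_classes f t lam)))
       \<and> (l = 2 \<longrightarrow> (\<forall>n::nat. f lam ^ n < f 2 \<longrightarrow>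
            finite (Cquot f t lam n) \<and> card (Cquot f t lam n) = card (residue_classes f t lam)))"
proof -
  have av: "is_absval f" and rv: "\<And>q. f (of_rat q) = padic_abs_rat l q"
    and fd: "finite_dim_over (closure_of_rat f)"
    using assms(2) unfolding finite_ext_Ql_def by auto
  interpret M: MAIN f l t lam
    by unfold_locales (use av rv assms in auto)
  have fin: "finite (residue_classes f t lam)"
    by (rule M.residue_finite[OF M.net[OF fd]])
  have key: "\<And>n. f lam ^ n < f 2 \<Longrightarrow>
      finite (Cquot f t lam n) \<and> card (Cquot f t lam n) = card (residue_classes f t lam)"
    using M.main_n fin by blast
  have part1: "finite (Cquot f t lam n) \<and> card (Cquot f t lam n) = card (residue_classes f t lam)"
    if l2: "l \<noteq> 2" and n: "n \<ge> 1" for n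
  proof -
    have "\<not> int l dvd 2"
    proof
      assume "int l dvd 2"
      hence "l dvd 2" by presburger
      hence "l \<le> 2" by (simp add: dvd_imp_le)
      moreover have "l \<ge> 2" using assms(1) prime_ge_2_nat by blast
      ultimately show False using l2 by simp
    qed
    hence f2: "f 2 = 1" using M.f_int_ndvd[of 2] by simp
    have "f lam ^ n \<le> f lam ^ 1" using n M.rho_lt1 M.nonneg[of lam]
      by (intro power_decreasing) auto
    hence "f lam ^ n < f 2" using f2 M.rho_lt1 by simp
    thus ?thesis by (rule key)
  qed
  show ?thesis using part1 key by blast
qed



end
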